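(* Let $(\boldsymbol{x}^1,\boldsymbol{x}^2)\in(\mathbb{T}^3\times\mathbb{T}^3)\setminus\Delta$ and, for $\omega_1,\omega_2,\dots\in\Omega_0$, set $\boldsymbol{x}^j_0=\boldsymbol{x}^j$, $\boldsymbol{x}^j_n=f_{\omega_n}(\boldsymbol{x}^j_{n-1})=(x^j_n,y^j_n,z^j_n)$ for $j=1,2$. Then for any $\varepsilon>0$ there exist $N_1\in\mathbb{N}$ and $(\omega_1,\dots,\omega_{N_1})\in\Omega_0^{N_1}$ such that $x^1_{N_1}=x^2_{N_1}$, $y^1_{N_1}=y^2_{N_1}$ and $|z^1_{N_1}-z^2_{N_1}|<\varepsilon$. In particular $\mathrm{dist}_{\mathbb{T}^3}(\boldsymbol{x}^1_{N_1},\boldsymbol{x}^2_{N_1})<\varepsilon$.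
   Context: $\mathbb{T}^3=\mathbb{R}^3/(2\pi\mathbb{Z})^3$ with points $\boldsymbol{x}=(x,y,z)$ and its standard flat distance $\mathrm{dist}_{\mathbb{T}^3}$; $\Delta=\{(\boldsymbol{x}^1,\boldsymbol{x}^2):\boldsymbol{x}^1=\boldsymbol{x}^2\}$. Fix $U>0$ and let $\Omega_0=[-U,U]^3\times[0,2\pi)^3$, with elements $\omega=(\mathsf{A},\mathsf{B},\mathsf{C},\alpha,\beta,\gamma)$. Define maps of $\mathbb{T}^3$: $f_{(\mathsf{A},\alpha)}(x,y,z)=(x+\mathsf{A}\sin(z+\alpha),\ y+\mathsf{A}\cos(z+\alpha),\ z)$, $f_{(\mathsf{B},\beta)}(x,y,z)=(x,\ y+\mathsf{B}\sin(x+\beta),\ z+\mathsf{B}\cos(x+\beta))$, $f_{(\mathsf{C},\gamma)}(x,y,z)=(x+\mathsf{C}\cos(y+\gamma),\ y,\ z+\mathsf{C}\sin(y+\gamma))$, and $f_\omega=f_{(\mathsf{C},\gamma)}\circ f_{(\mathsf{B},\beta)}\circ f_{(\mathsf{A},\alpha)}$. *)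

theory Defs
  imports "HOL-Analysis.Analysis"
begin

text \<open>Points of the torus T^3 = R^3/(2 pi Z)^3 are represented by real triples
  (lifts); two triples denote the same torus point iff their coordinates agree mod 2 pi.\<close>

type_synonym pt = "real \<times> real \<times> real"
type_synonym param = "real \<times> real \<times> real \<times> real \<times> real \<times> real"

definition cong2pi :: "real \<Rightarrow> real \<Rightarrow> bool" where
  "cong2pi a b \<longleftrightarrow> (\<exists>k::int. a - b = 2 * pi * of_int k)"

definition teq :: "pt \<Rightarrow> pt \<Rightarrow> bool" where
  "teq p q \<longleftrightarrow> cong2pi (fst p) (fst q) \<and> cong2pi (fst (snd p)) (fst (snd q))
                 \<and> cong2pi (snd (snd p)) (snd (snd q))"

definition dist_T3 :: "pt \<Rightarrow> pt \<Rightarrow> real" where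
  "dist_T3 p q = Inf {sqrt ((fst p - fst q - 2 * pi * of_int k1)^2
                          + (fst (snd p) - fst (snd q) - 2 * pi * of_int k2)^2
                          + (snd (snd p) - snd (snd q) - 2 * pi * of_int k3)^2) | k1 k2 k3 :: int. True}"

definition dist_T1 :: "real \<Rightarrow> real \<Rightarrow> real" where
  "dist_T1 a b = Inf {\<bar>a - b - 2 * pi * of_int k\<bar> | k :: int. True}"

definition fA :: "real \<Rightarrow> real \<Rightarrow> pt \<Rightarrow> pt" where
  "fA A \<alpha> p = (case p of (x,y,z) \<Rightarrow> (x + A * sin (z + \<alpha>), y + A * cos (z + \<alpha>), z))"

definition fB :: "real \<Rightarrow> real \<Rightarrow> pt \<Rightarrow> pt" where
  "fB B \<beta> p = (case p of (x,y,z) \<Rightarrow> (x, y + B * sin (x + \<beta>), z + B * cos (x + \<beta>)))"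

definition fC :: "real \<Rightarrow> real \<Rightarrow> pt \<Rightarrow> pt" where
  "fC C \<gamma> p = (case p of (x,y,z) \<Rightarrow> (x + C * cos (y + \<gamma>), y, z + C * sin (y + \<gamma>)))"

definition f_omega :: "param \<Rightarrow> pt \<Rightarrow> pt" where
  "f_omega \<omega> = (case \<omega> of (A,B,C,\<alpha>,\<beta>,\<gamma>) \<Rightarrow> fC C \<gamma> \<circ> fB B \<beta> \<circ> fA A \<alpha>)"

definition Omega0 :: "real \<Rightarrow> param set" where
  "Omega0 U = {(A,B,C,\<alpha>,\<beta>,\<gamma>). A \<in> {-U..U} \<and> B \<in> {-U..U} \<and> C \<in> {-U..U}
                 \<and> \<alpha> \<in> {0..<2*pi} \<and> \<beta> \<in> {0..<2*pi} \<and> \<gamma> \<in> {0..<2*pi}}"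

text \<open>x_n = f_{omega_n}(x_{n-1}), with omega_1..omega_n given as the list ws (first applied first).\<close>
definition orbit :: "param list \<Rightarrow> pt \<Rightarrow> pt" where
  "orbit ws p = fold f_omega ws p"

end

theory Submission imports Defs begin

lemma rot_solve:
  fixes P Q u1 u2 :: real
  assumes PQ: "P^2 + Q^2 > 0"
  shows "\<exists>B \<beta>. 0 \<le> \<beta> \<and> \<beta> < 2*pi \<and> B*(P * cos \<beta> + Q * sin \<beta>) = u1 \<and> B*(Q * cos \<beta> - P * sin \<beta>) = u2"
proof (cases "u1 = 0 \<and> u2 = 0")
  case True
  then show ?thesis by (intro exI[of _ 0] exI[of _ 0]) auto
next
  case False
  define \<rho> where "\<rho> = sqrt (u1^2 + u2^2)"
  define r where "r = sqrt (P^2 + Q^2)"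
  have u: "u1^2 + u2^2 > 0" using False by (auto simp: sum_power2_gt_zero_iff)
  have \<rho>pos: "\<rho> > 0" and \<rho>2: "\<rho>^2 = u1^2+u2^2" using u by (auto simp: \<rho>_def)
  have rpos: "r > 0" and r2: "r^2 = P^2+Q^2" using PQ by (auto simp: r_def)
  have pqnz: "P^2+Q^2 \<noteq> 0" using PQ by linarith
  have nz: "(P^2+Q^2)*(u1^2+u2^2) \<noteq> 0" using PQ u by (metis less_irrefl mult_pos_pos)
  define c where "c = (P*u1 + Q*u2)/(r*\<rho>)"
  define s where "s = (Q*u1 - P*u2)/(r*\<rho>)"
  have "c^2 + s^2 = ((P*u1 + Q*u2)^2 + (Q*u1 - P*u2)^2)/(r^2*\<rho>^2)"
    by (simp add: c_def s_def power_divide power_mult_distrib add_divide_distrib[symmetric] diff_divide_distrib[symmetric])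
  also have "(P*u1 + Q*u2)^2 + (Q*u1 - P*u2)^2 = (P^2+Q^2)*(u1^2+u2^2)"
    by (simp add: power2_eq_square algebra_simps)
  also have "\<dots> / (r^2*\<rho>^2) = 1" by (simp only: r2 \<rho>2 div_self[OF nz])
  finally have cs: "c^2 + s^2 = 1" .
  obtain t where t: "0 \<le> t" "t < 2*pi" "c = cos t" "s = sin t"
    using sincos_total_2pi[OF cs] by blast
  have e1: "(\<rho>/r)*(P*c + Q * s) = u1"
  proof -
    have "(\<rho>/r)*(P*c + Q * s) = (P*(P*u1 + Q*u2) + Q*(Q*u1 - P*u2))/r^2"
      using rpos \<rho>pos by (simp add: c_def s_def field_simps power2_eq_square)
    also have "\<dots> = ((P^2+Q^2)*u1)/r^2" by (simp add: algebra_simps power2_eq_square)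
    also have "\<dots> = u1" by (simp only: r2 nonzero_mult_div_cancel_left[OF pqnz])
    finally show ?thesis .
  qed
  have e2: "(\<rho>/r)*(Q*c - P * s) = u2"
  proof -
    have "(\<rho>/r)*(Q*c - P * s) = (Q*(P*u1 + Q*u2) - P*(Q*u1 - P*u2))/r^2"
      using rpos \<rho>pos by (simp add: c_def s_def field_simps power2_eq_square)
    also have "\<dots> = ((P^2+Q^2)*u2)/r^2" by (simp add: algebra_simps power2_eq_square)
    also have "\<dots> = u2" by (simp only: r2 nonzero_mult_div_cancel_left[OF pqnz])
    finally show ?thesis .
  qed
  show ?thesis using t e1 e2 by blast
qed

lemma orbit_Nil[simp]: "orbit [] p = p" by (simp add: orbit_def)
lemma orbit_Cons[simp]: "orbit (w # ws) p = orbit ws (f_omega w p)" by (simp add: orbit_def)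
lemma orbit_append: "orbit (ws1 @ ws2) p = orbit ws2 (orbit ws1 p)" by (simp add: orbit_def)

lemma aux: fixes P Q c s :: real shows "(P*c+Q * s)^2 + (Q*c-P * s)^2 = (P^2+Q^2)*(s^2+c^2)"
  by (simp add: power2_eq_square algebra_simps)

lemma reach:
  fixes mk :: "real \<Rightarrow> real \<Rightarrow> param" and inv :: "pt \<Rightarrow> pt \<Rightarrow> bool"
    and D1 D2 :: "pt \<Rightarrow> pt \<Rightarrow> real" and P Q U t1 t2 :: real
  assumes U: "U > 0" and PQ: "P^2 + Q^2 > 0"
  and mem: "\<And>B \<beta>. \<bar>B\<bar> \<le> U \<Longrightarrow> 0 \<le> \<beta> \<Longrightarrow> \<beta> < 2*pi \<Longrightarrow> mk B \<beta> \<in> Omega0 U"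
  and stp: "\<And>B \<beta> q1 q2. inv q1 q2 \<Longrightarrow> inv (f_omega (mk B \<beta>) q1) (f_omega (mk B \<beta>) q2)
     \<and> D1 (f_omega (mk B \<beta>) q1) (f_omega (mk B \<beta>) q2) = D1 q1 q2 + B*(P * cos \<beta> + Q * sin \<beta>)
     \<and> D2 (f_omega (mk B \<beta>) q1) (f_omega (mk B \<beta>) q2) = D2 q1 q2 + B*(Q * cos \<beta> - P * sin \<beta>)"
  and I: "inv q1 q2"
  shows "\<exists>ws. set ws \<subseteq> Omega0 U \<and> inv (orbit ws q1) (orbit ws q2)
     \<and> D1 (orbit ws q1) (orbit ws q2) = t1 \<and> D2 (orbit ws q1) (orbit ws q2) = t2"
proof -
  have claim: "\<forall>q1 q2. inv q1 q2 \<longrightarrow> (t1 - D1 q1 q2)^2 + (t2 - D2 q1 q2)^2 \<le> (real n * U)^2 * (P^2+Q^2)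
     \<longrightarrow> (\<exists>ws. set ws \<subseteq> Omega0 U \<and> inv (orbit ws q1) (orbit ws q2)
     \<and> D1 (orbit ws q1) (orbit ws q2) = t1 \<and> D2 (orbit ws q1) (orbit ws q2) = t2)" for n
  proof (induction n)
    case 0
    show ?case
    proof (intro allI impI)
      fix q1 q2 assume i: "inv q1 q2" and h: "(t1 - D1 q1 q2)^2 + (t2 - D2 q1 q2)^2 \<le> (real 0 * U)^2 * (P^2+Q^2)"
      then have "(t1 - D1 q1 q2)^2 + (t2 - D2 q1 q2)^2 = 0"
        by (intro antisym) (simp_all)
      then have "D1 q1 q2 = t1" "D2 q1 q2 = t2" by (simp_all add: add_nonneg_eq_0_iff)
      then show "\<exists>ws. set ws \<subseteq> Omega0 U \<and> inv (orbit ws q1) (orbit ws q2)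
        \<and> D1 (orbit ws q1) (orbit ws q2) = t1 \<and> D2 (orbit ws q1) (orbit ws q2) = t2"
        using i by (intro exI[of _ "[]"]) auto
    qed
  next
    case (Suc n)
    show ?case
    proof (intro allI impI)
      fix q1 q2 assume i: "inv q1 q2" and h: "(t1 - D1 q1 q2)^2 + (t2 - D2 q1 q2)^2 \<le> (real (Suc n) * U)^2 * (P^2+Q^2)"
      define m where "m = real (Suc n)"
      have mpos: "m > 0" by (simp add: m_def)
      define v1 where "v1 = t1 - D1 q1 q2"
      define v2 where "v2 = t2 - D2 q1 q2"
      obtain B \<beta> where b: "0 \<le> \<beta>" "\<beta> < 2*pi" "B*(P * cos \<beta> + Q * sin \<beta>) = v1/m" "B*(Q * cos \<beta> - P * sin \<beta>) = v2/m"
        using rot_solve[OF PQ, of "v1/m" "v2/m"] by blast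
      have "B^2 * (P^2+Q^2) = B^2 * ((P * cos \<beta> + Q * sin \<beta>)^2 + (Q * cos \<beta> - P * sin \<beta>)^2)"
      proof -
        have "(P * cos \<beta> + Q * sin \<beta>)^2 + (Q * cos \<beta> - P * sin \<beta>)^2 = (P^2+Q^2)*((sin \<beta>)^2 + (cos \<beta>)^2)"
          by (rule aux)
        then show ?thesis by simp
      qed
      also have "\<dots> = (B*(P * cos \<beta> + Q * sin \<beta>))^2 + (B*(Q * cos \<beta> - P * sin \<beta>))^2"
        by (simp add: power2_eq_square algebra_simps)
      also have "\<dots> = (v1/m)^2 + (v2/m)^2" by (simp only: b(3,4))
      also have "\<dots> = (v1^2+v2^2)/m^2" by (simp add: power_divide add_divide_distrib)
      also have "\<dots> \<le> (m*U)^2*(P^2+Q^2)/m^2" using h mpos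
        by (intro divide_right_mono) (auto simp: v1_def v2_def m_def)
      also have "\<dots> = U^2 * (P^2+Q^2)" using mpos by (simp add: power_mult_distrib)
      finally have "B^2 \<le> U^2" using PQ by simp
      then have BU: "\<bar>B\<bar> \<le> U" using U by (metis abs_le_square_iff abs_of_pos)
      define w where "w = mk B \<beta>"
      have wm: "w \<in> Omega0 U" using mem[OF BU b(1,2)] by (simp add: w_def)
      define q1' where "q1' = f_omega w q1"
      define q2' where "q2' = f_omega w q2"
      have st: "inv q1' q2'" "D1 q1' q2' = D1 q1 q2 + v1/m" "D2 q1' q2' = D2 q1 q2 + v2/m"
        using stp[OF i, of B \<beta>] b by (auto simp: q1'_def q2'_def w_def)
      have "(t1 - D1 q1' q2')^2 + (t2 - D2 q1' q2')^2 = (v1 - v1/m)^2 + (v2 - v2/m)^2"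
        using st by (simp add: v1_def v2_def algebra_simps)
      also have "\<dots> = ((m-1)/m)^2 * (v1^2+v2^2)" using mpos
        by (simp add: field_simps power2_eq_square)
      also have "\<dots> \<le> ((m-1)/m)^2 * ((m*U)^2 * (P^2+Q^2))"
        using h by (intro mult_left_mono) (auto simp: v1_def v2_def m_def)
      also have "\<dots> = ((m-1)*U)^2 * (P^2+Q^2)" using mpos
        by (simp add: power_mult_distrib power_divide)
      also have "\<dots> = (real n * U)^2 * (P^2+Q^2)" by (simp add: m_def)
      finally obtain ws where ws: "set ws \<subseteq> Omega0 U \<and> inv (orbit ws q1') (orbit ws q2')
        \<and> D1 (orbit ws q1') (orbit ws q2') = t1 \<and> D2 (orbit ws q1') (orbit ws q2') = t2"
        using Suc.IH st(1) by blast
      show "\<exists>ws. set ws \<subseteq> Omega0 U \<and> inv (orbit ws q1) (orbit ws q2)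
        \<and> D1 (orbit ws q1) (orbit ws q2) = t1 \<and> D2 (orbit ws q1) (orbit ws q2) = t2"
        using ws wm by (intro exI[of _ "w # ws"]) (auto simp: q1'_def q2'_def)
    qed
  qed
  define K where "K = (t1 - D1 q1 q2)^2 + (t2 - D2 q1 q2)^2"
  obtain n :: nat where n: "K / (U^2 * (P^2+Q^2)) \<le> real n" using real_arch_simple by blast
  have "real n \<le> (real n)^2"
    by (cases n) (auto simp: power2_eq_square)
  have X: "U^2 * (P^2+Q^2) > 0" using U PQ by simp
  have "K \<le> real n * (U^2 * (P^2+Q^2))" using n X by (simp add: pos_divide_le_eq)
  also have "\<dots> \<le> (real n)^2 * (U^2 * (P^2+Q^2))"
    using X \<open>real n \<le> (real n)^2\<close> by (intro mult_right_mono) auto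
  finally have "K \<le> (real n)^2 * (U^2 * (P^2+Q^2))" .
  then have "K \<le> (real n * U)^2 * (P^2+Q^2)" by (simp add: power_mult_distrib)
  then show ?thesis using claim[of n] I unfolding K_def by blast
qed


lemma PQpos:
  assumes "\<not> cong2pi a b"
  shows "(sin a - sin b)^2 + (cos a - cos b)^2 > 0"
proof -
  have e: "(sin a - sin b)^2 + (cos a - cos b)^2 = 2 - 2 * cos (a - b)"
    by (simp add: cos_diff power2_eq_square algebra_simps)
  have "cos (a - b) \<noteq> 1"
  proof
    assume "cos (a - b) = 1"
    then obtain n :: int where "a - b = real_of_int n * 2 * pi" using cos_one_2pi_int by blast
    then have "cong2pi a b" unfolding cong2pi_def by (intro exI[of _ n]) simp
    with assms show False by simp
  qed
  moreover have "cos (a - b) \<le> 1" by simp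
  ultimately show ?thesis using e by linarith
qed

lemma notcong:
  assumes "0 < d" "d < 2*pi" "a - b = d"
  shows "\<not> cong2pi a b"
proof
  assume "cong2pi a b"
  then obtain k :: int where k: "d = 2*pi * of_int k" using assms unfolding cong2pi_def by auto
  have "(0::real) < of_int k" using assms(1) k pi_gt_zero by (simp add: zero_less_mult_iff)
  moreover have "of_int k < (1::real)" using assms(2) k pi_gt_zero by simp
  ultimately show False by simp
qed

definition mkA :: "real \<Rightarrow> real \<Rightarrow> param" where "mkA A \<alpha> = (A,0,0,\<alpha>,0,0)"
definition mkB :: "real \<Rightarrow> real \<Rightarrow> param" where "mkB B \<beta> = (0,B,0,0,\<beta>,0)"
definition mkC :: "real \<Rightarrow> real \<Rightarrow> param" where "mkC C \<gamma> = (0,0,C,0,0,\<gamma>)"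

lemma fA_step: "f_omega (mkA A \<alpha>) (x,y,z) = (x + A * sin (z+\<alpha>), y + A * cos (z+\<alpha>), z)"
  by (simp add: mkA_def f_omega_def fA_def fB_def fC_def)
lemma fB_step: "f_omega (mkB B \<beta>) (x,y,z) = (x, y + B * sin (x+\<beta>), z + B * cos (x+\<beta>))"
  by (simp add: mkB_def f_omega_def fA_def fB_def fC_def)
lemma fC_step: "f_omega (mkC C \<gamma>) (x,y,z) = (x + C * cos (y+\<gamma>), y, z + C * sin (y+\<gamma>))"
  by (simp add: mkC_def f_omega_def fA_def fB_def fC_def)
lemma f_zero: "f_omega (0,0,0,0,0,0) p = p"
  by (cases p) (simp add: f_omega_def fA_def fB_def fC_def)

lemma mem_mk:
  assumes "U > 0" "\<bar>B\<bar> \<le> U" "0 \<le> \<beta>" "\<beta> < 2*pi"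
  shows "mkA B \<beta> \<in> Omega0 U" "mkB B \<beta> \<in> Omega0 U" "mkC B \<beta> \<in> Omega0 U"
  using assms by (auto simp: mkA_def mkB_def mkC_def Omega0_def abs_le_iff)

lemma zero_mem: "U > 0 \<Longrightarrow> (0,0,0,0,0,0) \<in> Omega0 U"
  by (simp add: Omega0_def)

lemma reachA:
  fixes p1 p2 :: pt
  assumes U: "U > 0" and nc: "\<not> cong2pi (snd (snd p1)) (snd (snd p2))"
  shows "\<exists>ws. set ws \<subseteq> Omega0 U \<and> snd (snd (orbit ws p1)) = snd (snd p1) \<and> snd (snd (orbit ws p2)) = snd (snd p2)
     \<and> fst (orbit ws p1) - fst (orbit ws p2) = t1 \<and> fst (snd (orbit ws p1)) - fst (snd (orbit ws p2)) = t2"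
proof -
  define c1 where "c1 = snd (snd p1)"
  define c2 where "c2 = snd (snd p2)"
  have "\<exists>ws. set ws \<subseteq> Omega0 U \<and> (\<lambda>q1 q2. snd (snd q1) = c1 \<and> snd (snd q2) = c2) (orbit ws p1) (orbit ws p2)
     \<and> (\<lambda>q1 q2. fst q1 - fst q2) (orbit ws p1) (orbit ws p2) = t1
     \<and> (\<lambda>q1 q2. fst (snd q1) - fst (snd q2)) (orbit ws p1) (orbit ws p2) = t2"
  proof (rule reach[where mk = mkA and P = "sin c1 - sin c2" and Q = "cos c1 - cos c2"])
    show "U > 0" by fact
    show "0 < (sin c1 - sin c2)^2 + (cos c1 - cos c2)^2" using PQpos nc by (simp add: c1_def c2_def)
    show "\<And>B \<beta>. \<bar>B\<bar> \<le> U \<Longrightarrow> 0 \<le> \<beta> \<Longrightarrow> \<beta> < 2*pi \<Longrightarrow> mkA B \<beta> \<in> Omega0 U"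
      using mem_mk U by blast
    show "snd (snd p1) = c1 \<and> snd (snd p2) = c2" by (simp add: c1_def c2_def)
  next
    fix B \<beta> :: real and q1 q2 :: pt
    assume "snd (snd q1) = c1 \<and> snd (snd q2) = c2"
    then obtain x1 y1 x2 y2 where q: "q1 = (x1,y1,c1)" "q2 = (x2,y2,c2)"
      by (metis prod.collapse)
    show "(\<lambda>q1 q2. snd (snd q1) = c1 \<and> snd (snd q2) = c2) (f_omega (mkA B \<beta>) q1) (f_omega (mkA B \<beta>) q2) \<and>
       (\<lambda>q1 q2. fst q1 - fst q2) (f_omega (mkA B \<beta>) q1) (f_omega (mkA B \<beta>) q2) =
       (\<lambda>q1 q2. fst q1 - fst q2) q1 q2 + B * ((sin c1 - sin c2) * cos \<beta> + (cos c1 - cos c2) * sin \<beta>) \<and>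
       (\<lambda>q1 q2. fst (snd q1) - fst (snd q2)) (f_omega (mkA B \<beta>) q1) (f_omega (mkA B \<beta>) q2) =
       (\<lambda>q1 q2. fst (snd q1) - fst (snd q2)) q1 q2 + B * ((cos c1 - cos c2) * cos \<beta> - (sin c1 - sin c2) * sin \<beta>)"
      unfolding q fA_step by (simp add: sin_add cos_add algebra_simps)
  qed
  then show ?thesis by (simp add: c1_def c2_def)
qed

lemma reachB:
  fixes p1 p2 :: pt
  assumes U: "U > 0" and nc: "\<not> cong2pi (fst p1) (fst p2)"
  shows "\<exists>ws. set ws \<subseteq> Omega0 U \<and> fst (orbit ws p1) = fst p1 \<and> fst (orbit ws p2) = fst p2
     \<and> fst (snd (orbit ws p1)) - fst (snd (orbit ws p2)) = t1 \<and> snd (snd (orbit ws p1)) - snd (snd (orbit ws p2)) = t2"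
proof -
  define c1 where "c1 = fst p1"
  define c2 where "c2 = fst p2"
  have "\<exists>ws. set ws \<subseteq> Omega0 U \<and> (\<lambda>q1 q2. fst q1 = c1 \<and> fst q2 = c2) (orbit ws p1) (orbit ws p2)
     \<and> (\<lambda>q1 q2. fst (snd q1) - fst (snd q2)) (orbit ws p1) (orbit ws p2) = t1
     \<and> (\<lambda>q1 q2. snd (snd q1) - snd (snd q2)) (orbit ws p1) (orbit ws p2) = t2"
  proof (rule reach[where mk = mkB and P = "sin c1 - sin c2" and Q = "cos c1 - cos c2"])
    show "U > 0" by fact
    show "0 < (sin c1 - sin c2)^2 + (cos c1 - cos c2)^2" using PQpos nc by (simp add: c1_def c2_def)
    show "\<And>B \<beta>. \<bar>B\<bar> \<le> U \<Longrightarrow> 0 \<le> \<beta> \<Longrightarrow> \<beta> < 2*pi \<Longrightarrow> mkB B \<beta> \<in> Omega0 U"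
      using mem_mk U by blast
    show "fst p1 = c1 \<and> fst p2 = c2" by (simp add: c1_def c2_def)
  next
    fix B \<beta> :: real and q1 q2 :: pt
    assume "fst q1 = c1 \<and> fst q2 = c2"
    then obtain y1 z1 y2 z2 where q: "q1 = (c1,y1,z1)" "q2 = (c2,y2,z2)"
      by (metis prod.collapse)
    show "(\<lambda>q1 q2. fst q1 = c1 \<and> fst q2 = c2) (f_omega (mkB B \<beta>) q1) (f_omega (mkB B \<beta>) q2) \<and>
       (\<lambda>q1 q2. fst (snd q1) - fst (snd q2)) (f_omega (mkB B \<beta>) q1) (f_omega (mkB B \<beta>) q2) =
       (\<lambda>q1 q2. fst (snd q1) - fst (snd q2)) q1 q2 + B * ((sin c1 - sin c2) * cos \<beta> + (cos c1 - cos c2) * sin \<beta>) \<and>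
       (\<lambda>q1 q2. snd (snd q1) - snd (snd q2)) (f_omega (mkB B \<beta>) q1) (f_omega (mkB B \<beta>) q2) =
       (\<lambda>q1 q2. snd (snd q1) - snd (snd q2)) q1 q2 + B * ((cos c1 - cos c2) * cos \<beta> - (sin c1 - sin c2) * sin \<beta>)"
      unfolding q fB_step by (simp add: sin_add cos_add algebra_simps)
  qed
  then show ?thesis by (simp add: c1_def c2_def)
qed

lemma reachC:
  fixes p1 p2 :: pt
  assumes U: "U > 0" and nc: "\<not> cong2pi (fst (snd p1)) (fst (snd p2))"
  shows "\<exists>ws. set ws \<subseteq> Omega0 U \<and> fst (snd (orbit ws p1)) = fst (snd p1) \<and> fst (snd (orbit ws p2)) = fst (snd p2)
     \<and> snd (snd (orbit ws p1)) - snd (snd (orbit ws p2)) = t1 \<and> fst (orbit ws p1) - fst (orbit ws p2) = t2"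
proof -
  define c1 where "c1 = fst (snd p1)"
  define c2 where "c2 = fst (snd p2)"
  have "\<exists>ws. set ws \<subseteq> Omega0 U \<and> (\<lambda>q1 q2. fst (snd q1) = c1 \<and> fst (snd q2) = c2) (orbit ws p1) (orbit ws p2)
     \<and> (\<lambda>q1 q2. snd (snd q1) - snd (snd q2)) (orbit ws p1) (orbit ws p2) = t1
     \<and> (\<lambda>q1 q2. fst q1 - fst q2) (orbit ws p1) (orbit ws p2) = t2"
  proof (rule reach[where mk = mkC and P = "sin c1 - sin c2" and Q = "cos c1 - cos c2"])
    show "U > 0" by fact
    show "0 < (sin c1 - sin c2)^2 + (cos c1 - cos c2)^2" using PQpos nc by (simp add: c1_def c2_def)
    show "\<And>B \<beta>. \<bar>B\<bar> \<le> U \<Longrightarrow> 0 \<le> \<beta> \<Longrightarrow> \<beta> < 2*pi \<Longrightarrow> mkC B \<beta> \<in> Omega0 U"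
      using mem_mk U by blast
    show "fst (snd p1) = c1 \<and> fst (snd p2) = c2" by (simp add: c1_def c2_def)
  next
    fix B \<beta> :: real and q1 q2 :: pt
    assume "fst (snd q1) = c1 \<and> fst (snd q2) = c2"
    then obtain x1 z1 x2 z2 where q: "q1 = (x1,c1,z1)" "q2 = (x2,c2,z2)"
      by (metis prod.collapse)
    show "(\<lambda>q1 q2. fst (snd q1) = c1 \<and> fst (snd q2) = c2) (f_omega (mkC B \<beta>) q1) (f_omega (mkC B \<beta>) q2) \<and>
       (\<lambda>q1 q2. snd (snd q1) - snd (snd q2)) (f_omega (mkC B \<beta>) q1) (f_omega (mkC B \<beta>) q2) =
       (\<lambda>q1 q2. snd (snd q1) - snd (snd q2)) q1 q2 + B * ((sin c1 - sin c2) * cos \<beta> + (cos c1 - cos c2) * sin \<beta>) \<and>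
       (\<lambda>q1 q2. fst q1 - fst q2) (f_omega (mkC B \<beta>) q1) (f_omega (mkC B \<beta>) q2) =
       (\<lambda>q1 q2. fst q1 - fst q2) q1 q2 + B * ((cos c1 - cos c2) * cos \<beta> - (sin c1 - sin c2) * sin \<beta>)"
      unfolding q fC_step by (simp add: sin_add cos_add algebra_simps)
  qed
  then show ?thesis by (simp add: c1_def c2_def)
qed


lemma dist_T1_le: "dist_T1 a b \<le> \<bar>a - b\<bar>"
proof -
  have "\<bar>a - b - 2 * pi * of_int (0::int)\<bar> \<in> {\<bar>a - b - 2 * pi * of_int k\<bar> | k :: int. True}" by blast
  moreover have "bdd_below {\<bar>a - b - 2 * pi * of_int k\<bar> | k :: int. True}"
    by (rule bdd_belowI[of _ 0]) auto
  ultimately have "Inf {\<bar>a - b - 2 * pi * of_int k\<bar> | k :: int. True} \<le> \<bar>a - b - 2 * pi * of_int (0::int)\<bar>"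
    by (rule cInf_lower)
  then show ?thesis unfolding dist_T1_def by simp
qed

lemma dist_T3_le: "dist_T3 p q \<le> sqrt ((fst p - fst q)^2 + (fst (snd p) - fst (snd q))^2 + (snd (snd p) - snd (snd q))^2)"
proof -
  let ?S = "{sqrt ((fst p - fst q - 2 * pi * of_int k1)^2
                          + (fst (snd p) - fst (snd q) - 2 * pi * of_int k2)^2
                          + (snd (snd p) - snd (snd q) - 2 * pi * of_int k3)^2) | k1 k2 k3 :: int. True}"
  have "sqrt ((fst p - fst q - 2 * pi * of_int (0::int))^2
                          + (fst (snd p) - fst (snd q) - 2 * pi * of_int (0::int))^2
                          + (snd (snd p) - snd (snd q) - 2 * pi * of_int (0::int))^2) \<in> ?S" by blast
  moreover have "bdd_below ?S"
    by (rule bdd_belowI[of _ 0]) auto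
  ultimately have "Inf ?S \<le> sqrt ((fst p - fst q - 2 * pi * of_int (0::int))^2
                          + (fst (snd p) - fst (snd q) - 2 * pi * of_int (0::int))^2
                          + (snd (snd p) - snd (snd q) - 2 * pi * of_int (0::int))^2)"
    by (rule cInf_lower)
  then show ?thesis unfolding dist_T3_def by simp
qed

theorem lemma3p7:
  fixes U \<epsilon> :: real and p1 p2 :: pt
  assumes "U > 0" and "\<not> teq p1 p2" and "\<epsilon> > 0"
  shows "\<exists>N1 ws. N1 \<ge> 1 \<and> length ws = N1 \<and> set ws \<subseteq> Omega0 U
            \<and> cong2pi (fst (orbit ws p1)) (fst (orbit ws p2))
            \<and> cong2pi (fst (snd (orbit ws p1))) (fst (snd (orbit ws p2)))
            \<and> dist_T1 (snd (snd (orbit ws p1))) (snd (snd (orbit ws p2))) < \<epsilon>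
            \<and> dist_T3 (orbit ws p1) (orbit ws p2) < \<epsilon>"
proof -
  note U = assms(1)
  have pi2: "pi < 2*pi" using pi_gt_zero by linarith
  obtain ws0 where ws0: "set ws0 \<subseteq> Omega0 U" "\<not> cong2pi (fst (orbit ws0 p1)) (fst (orbit ws0 p2))"
  proof (cases "cong2pi (fst p1) (fst p2)")
    case False
    then show ?thesis using that[of "[]"] by simp
  next
    case cx: True
    show ?thesis
    proof (cases "cong2pi (snd (snd p1)) (snd (snd p2))")
      case False
      from reachA[OF U False, of pi 0] obtain ws where
        "set ws \<subseteq> Omega0 U" "fst (orbit ws p1) - fst (orbit ws p2) = pi" by blast
      then show ?thesis using that notcong[OF pi_gt_zero pi2] by blast
    next
      case True
      then have "\<not> cong2pi (fst (snd p1)) (fst (snd p2))" using cx assms(2) by (simp add: teq_def)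
      from reachC[OF U this, of 0 pi] obtain ws where
        "set ws \<subseteq> Omega0 U" "fst (orbit ws p1) - fst (orbit ws p2) = pi" by blast
      then show ?thesis using that notcong[OF pi_gt_zero pi2] by blast
    qed
  qed
  define \<delta> where "\<delta> = min \<epsilon> pi / 2"
  have d: "0 < \<delta>" "\<delta> < \<epsilon>" "\<delta> < 2*pi" using assms(3) pi_gt_zero by (auto simp: \<delta>_def min_def)
  define q1 where "q1 = orbit ws0 p1"
  define q2 where "q2 = orbit ws0 p2"
  from reachB[OF U ws0(2)[folded q1_def q2_def], of 0 \<delta>] obtain wsb where
    wsb: "set wsb \<subseteq> Omega0 U" "snd (snd (orbit wsb q1)) - snd (snd (orbit wsb q2)) = \<delta>" by blast
  define r1 where "r1 = orbit wsb q1"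
  define r2 where "r2 = orbit wsb q2"
  have ncz: "\<not> cong2pi (snd (snd r1)) (snd (snd r2))"
    using notcong[OF d(1) d(3)] wsb(2) by (simp add: r1_def r2_def)
  from reachA[OF U ncz, of 0 0] obtain wsc where
    wsc: "set wsc \<subseteq> Omega0 U" "snd (snd (orbit wsc r1)) = snd (snd r1)" "snd (snd (orbit wsc r2)) = snd (snd r2)"
      "fst (orbit wsc r1) - fst (orbit wsc r2) = 0" "fst (snd (orbit wsc r1)) - fst (snd (orbit wsc r2)) = 0"
    by blast
  define ws where "ws = ws0 @ wsb @ wsc @ [(0,0,0,0,0,0)]"
  have o1: "orbit ws p1 = orbit wsc r1"
    by (simp add: ws_def orbit_append f_zero r1_def q1_def)
  have o2: "orbit ws p2 = orbit wsc r2"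
    by (simp add: ws_def orbit_append f_zero r2_def q2_def)
  have sws: "set ws \<subseteq> Omega0 U" using ws0(1) wsb(1) wsc(1) zero_mem[OF U] by (auto simp: ws_def)
  have dz: "snd (snd (orbit ws p1)) - snd (snd (orbit ws p2)) = \<delta>"
    using o1 o2 wsc(2,3) wsb(2) by (simp add: r1_def r2_def)
  have dx: "fst (orbit ws p1) - fst (orbit ws p2) = 0" using o1 o2 wsc(4) by simp
  have dy: "fst (snd (orbit ws p1)) - fst (snd (orbit ws p2)) = 0" using o1 o2 wsc(5) by simp
  have c1: "cong2pi (fst (orbit ws p1)) (fst (orbit ws p2))"
    unfolding cong2pi_def using dx by (intro exI[of _ 0]) simp
  have c2: "cong2pi (fst (snd (orbit ws p1))) (fst (snd (orbit ws p2)))"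
    unfolding cong2pi_def using dy by (intro exI[of _ 0]) simp
  have t1: "dist_T1 (snd (snd (orbit ws p1))) (snd (snd (orbit ws p2))) < \<epsilon>"
    using dist_T1_le[of "snd (snd (orbit ws p1))" "snd (snd (orbit ws p2))"] dz d by simp
  have t3: "dist_T3 (orbit ws p1) (orbit ws p2) < \<epsilon>"
    using dist_T3_le[of "orbit ws p1" "orbit ws p2"] dz dx dy d by simp
  show ?thesis
  proof (intro exI conjI)
    show "1 \<le> length ws" by (simp add: ws_def)
  qed (use sws c1 c2 t1 t3 in \<open>simp_all\<close>)
qed

end
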